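(* For every integer $n\ge 3$, the prism graph $GP(n,1)$ is odd prime.
   Context: All graphs are finite and simple. A graph $G$ of order $N$ is odd prime if there is a bijection $\ell:V(G)\to\{1,3,\ldots,2N-1\}$ with $\gcd(\ell(u),\ell(v))=1$ for every edge $uv$. The prism graph $GP(n,1)$ has vertices $u_1,\ldots,u_n,v_1,\ldots,v_n$ and edges $u_iu_{i+1}$, $v_iv_{i+1}$ for $1\le i\le n-1$, $u_nu_1$, $v_nv_1$, and $u_iv_i$ for $1\le i\le n$. *)

theory Defs
  imports Main
begin

definition simple_graph :: "'a set \<Rightarrow> 'a set set \<Rightarrow> bool" where
  "simple_graph V E \<longleftrightarrow> finite V \<and> (\<forall>e\<in>E. e \<subseteq> V \<and> card e = 2)"

definition odd_prime_labeling :: "'a set \<Rightarrow> 'a set set \<Rightarrow> ('a \<Rightarrow> nat) \<Rightarrow> bool" where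
  "odd_prime_labeling V E l \<longleftrightarrow>
     bij_betw l V {k. odd k \<and> k \<le> 2 * card V - 1} \<and>
     (\<forall>u v. {u, v} \<in> E \<longrightarrow> gcd (l u) (l v) = 1)"

definition odd_prime :: "'a set \<Rightarrow> 'a set set \<Rightarrow> bool" where
  "odd_prime V E \<longleftrightarrow> (\<exists>l. odd_prime_labeling V E l)"

text \<open>Prism graph GP(n,1). Vertex u_i is Inl (i-1), v_i is Inr (i-1), for
i = 1..n; indices are taken mod n (so the edge u_n u_1 is u_{n-1} u_0 here).\<close>

definition prism_vertices :: "nat \<Rightarrow> (nat + nat) set" where
  "prism_vertices n = Inl ` {0..<n} \<union> Inr ` {0..<n}"

definition prism_edges :: "nat \<Rightarrow> (nat + nat) set set" where
  "prism_edges n =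
     (\<lambda>i. {Inl i, Inl (Suc i mod n)}) ` {0..<n} \<union>
     (\<lambda>i. {Inr i, Inr (Suc i mod n)}) ` {0..<n} \<union>
     (\<lambda>i. {Inl i, Inr i}) ` {0..<n}"

end

theory Submission
  imports Defs
begin

lemma C2: "odd (a::nat) \<Longrightarrow> coprime a 2"
  by (metis coprime_right_2_iff_odd)

lemma A2: "odd (a::nat) \<Longrightarrow> gcd a (a+2) = 1"
proof -
  assume "odd a" then have "gcd a 2 = 1" using C2 coprime_iff_gcd_eq_1 by blast
  then show ?thesis by (simp only: gcd_add2)
qed

lemma A4: "odd (a::nat) \<Longrightarrow> gcd a (a+4) = 1"
proof -
  assume "odd a" then have "coprime a 2" using C2 by blast
  then have "coprime a (2^2)" by (simp only: coprime_power_right_iff) simp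
  then have "gcd a 4 = 1" by (simp add: coprime_iff_gcd_eq_1)
  then show ?thesis by (simp only: gcd_add2)
qed

lemma B: "\<not> 3 dvd (m::nat) \<Longrightarrow> gcd m 3 = 1"
proof -
  assume h: "\<not> 3 dvd m"
  have d: "gcd m 3 dvd 3" by simp
  then have "gcd m 3 \<le> 3" by (rule dvd_imp_le) simp
  moreover have "gcd m 3 \<noteq> 0" by simp
  moreover have "gcd m 3 \<noteq> 2" proof
    assume "gcd m 3 = 2" then have "(2::nat) dvd 3" using d by simp
    then show False by presburger qed
  moreover have "gcd m 3 \<noteq> 3" using h by (metis gcd_dvd1)
  ultimately show ?thesis by linarith
qed

definition lab :: "nat \<Rightarrow> nat + nat \<Rightarrow> nat" where
  "lab n x = (case x of
      Inl i \<Rightarrow> if i = 0 \<and> n mod 3 = 1 then 3 else 4*i+1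
    | Inr i \<Rightarrow> if i = 0 \<and> n mod 3 = 1 then 1 else 4*i+3)"

lemma card_V: "card (prism_vertices n) = 2*n"
proof -
  have "card (Inl ` {0..<n} \<union> Inr ` {0..<n} :: (nat+nat) set) = card (Inl ` {0..<n} :: (nat+nat) set) + card (Inr ` {0..<n} :: (nat+nat) set)"
    by (rule card_Un_disjoint) auto
  also have "\<dots> = n + n" by (simp add: card_image)
  finally show ?thesis unfolding prism_vertices_def by simp
qed

lemma lab_Inl[simp]: "lab n (Inl i) = (if i = 0 \<and> n mod 3 = 1 then 3 else 4*i+1)"
  by (simp add: lab_def)
lemma lab_Inr[simp]: "lab n (Inr i) = (if i = 0 \<and> n mod 3 = 1 then 1 else 4*i+3)"
  by (simp add: lab_def)

lemma L1: "lab n (Inl i) = lab n (Inl j) \<Longrightarrow> i = j"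
proof -
  assume h: "lab n (Inl i) = lab n (Inl j)"
  have "lab n (Inl i) mod 4 = 1 \<or> lab n (Inl i) = 3" "lab n (Inl j) mod 4 = 1 \<or> lab n (Inl j) = 3" by simp_all
  show "i = j"
  proof (cases "(i = 0 \<and> n mod 3 = 1)")
    case True
    then show ?thesis using h by (cases "j = 0"; simp; presburger)
  next
    case False
    then show ?thesis using h by (cases "j = 0"; auto; presburger)
  qed
qed
lemma L2: "lab n (Inr i) = lab n (Inr j) \<Longrightarrow> i = j"
proof -
  assume h: "lab n (Inr i) = lab n (Inr j)"
  show "i = j"
  proof (cases "(i = 0 \<and> n mod 3 = 1)")
    case True
    then show ?thesis using h by (cases "j = 0"; simp; presburger)
  next
    case False
    then show ?thesis using h by (cases "j = 0"; auto; presburger)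
  qed
qed
lemma L3: "lab n (Inl i) \<noteq> lab n (Inr j)"
proof
  assume h: "lab n (Inl i) = lab n (Inr j)"
  show False
  proof (cases "(i = 0 \<and> n mod 3 = 1)")
    case True
    then show ?thesis using h by (cases "j = 0"; simp; presburger)
  next
    case False
    then show ?thesis using h by (cases "j = 0"; auto; presburger)
  qed
qed

lemma lab_inj: "inj_on (lab n) (prism_vertices n)"
proof (rule inj_onI)
  fix x y assume h: "lab n x = lab n y"
  show "x = y"
  proof (cases x)
    case (Inl i) note xi = this
    show ?thesis
    proof (cases y)
      case (Inl j) then show ?thesis using h xi L1[of n i j] by simp
    next
      case (Inr j) then show ?thesis using h xi L3[of n i j] by simp
    qed
  next
    case (Inr i) note xi = this
    show ?thesis
    proof (cases y)
      case (Inl j) then show ?thesis using h xi L3[of n j i] by simp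
    next
      case (Inr j) then show ?thesis using h xi L2[of n i j] by simp
    qed
  qed
qed

lemma lab_img: "lab n ` prism_vertices n = {k. odd k \<and> k \<le> 2 * card (prism_vertices n) - 1}"
proof
  show "lab n ` prism_vertices n \<subseteq> {k. odd k \<and> k \<le> 2 * card (prism_vertices n) - 1}"
    unfolding card_V unfolding prism_vertices_def by (auto split: if_split_asm)
next
  show "{k. odd k \<and> k \<le> 2 * card (prism_vertices n) - 1} \<subseteq> lab n ` prism_vertices n"
  proof
    fix k assume "k \<in> {k. odd k \<and> k \<le> 2 * card (prism_vertices n) - 1}"
    then have k: "odd k" "k \<le> 4*n - 1" unfolding card_V by auto
    define i where "i = k div 4"
    have i: "i < n" using k unfolding i_def by presburger
    have kd: "k = 4*i + k mod 4" unfolding i_def by presburger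
    have "k mod 4 = 1 \<or> k mod 4 = 3" using k(1) by presburger
    then show "k \<in> lab n ` prism_vertices n"
    proof
      assume m: "k mod 4 = 1"
      show ?thesis
      proof (cases "i = 0 \<and> n mod 3 = 1")
        case True
        then have kk: "k = lab n (Inr 0)" using m kd by auto
        have mem: "Inr 0 \<in> prism_vertices n" using i unfolding prism_vertices_def by auto
        show ?thesis using image_eqI[where f="lab n", OF kk mem] .
      next
        case False
        then have kk: "k = lab n (Inl i)" using m kd by auto
        have mem: "Inl i \<in> prism_vertices n" using i unfolding prism_vertices_def by auto
        show ?thesis using image_eqI[where f="lab n", OF kk mem] .
      qed
    next
      assume m: "k mod 4 = 3"
      show ?thesis
      proof (cases "i = 0 \<and> n mod 3 = 1")
        case True
        then have kk: "k = lab n (Inl 0)" using m kd by auto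
        have mem: "Inl 0 \<in> prism_vertices n" using i unfolding prism_vertices_def by auto
        show ?thesis using image_eqI[where f="lab n", OF kk mem] .
      next
        case False
        then have kk: "k = lab n (Inr i)" using m kd by auto
        have mem: "Inr i \<in> prism_vertices n" using i unfolding prism_vertices_def by auto
        show ?thesis using image_eqI[where f="lab n", OF kk mem] .
      qed
    qed
  qed
qed

lemma edge_cases:
  assumes "n \<ge> 3" "i < n"
  shows "gcd (lab n (Inl i)) (lab n (Inl (Suc i mod n))) = 1"
    "gcd (lab n (Inr i)) (lab n (Inr (Suc i mod n))) = 1"
    "gcd (lab n (Inl i)) (lab n (Inr i)) = 1"
proof -
  show "gcd (lab n (Inl i)) (lab n (Inr i)) = 1"
  proof -
    have e: "(4*i+1)+2 = 4*i+3" by simp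
    have "gcd (4*i+1) (4*i+3) = 1" using A2[of "4*i+1", unfolded e] by simp
    then show ?thesis by simp
  qed
next
  show "gcd (lab n (Inl i)) (lab n (Inl (Suc i mod n))) = 1"
  proof (cases "Suc i < n")
    case True
    then have s: "Suc i mod n = Suc i" by simp
    show ?thesis unfolding s using A2[of 3] A4[of "4*i+1"]
      by (auto simp: add.assoc)
  next
    case False
    then have si: "Suc i = n" using assms by simp
    then have s: "Suc i mod n = 0" "i = n - 1" by auto
    have nz: "i \<noteq> 0" using assms s by auto
    show ?thesis
    proof (cases "n mod 3 = 1")
      case True
      have "\<not> 3 dvd (4*i+1)" using True s(2) assms(1) by presburger
      then show ?thesis using s nz True B by auto
    next
      case False
      then show ?thesis using s nz by auto
    qed
  qed
next
  show "gcd (lab n (Inr i)) (lab n (Inr (Suc i mod n))) = 1"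
  proof (cases "Suc i < n")
    case True
    then have s: "Suc i mod n = Suc i" by simp
    have e: "(4*i+3)+4 = 4*Suc i+3" by simp
    have "gcd (4*i+3) (4*Suc i+3) = 1" using A4[of "4*i+3", unfolded e] by simp
    then show ?thesis unfolding s by auto
  next
    case False
    then have si: "Suc i = n" using assms by simp
    then have s: "Suc i mod n = 0" "i = n - 1" by auto
    have nz: "i \<noteq> 0" using assms s by auto
    show ?thesis
    proof (cases "n mod 3 = 1")
      case True
      then show ?thesis using s nz by auto
    next
      case False
      have "\<not> 3 dvd (4*i+3)" using False s(2) assms(1) by presburger
      then show ?thesis using s nz False B by auto
    qed
  qed
qed

theorem theorem3p5:
  fixes n :: nat
  assumes "n \<ge> 3"
  shows "odd_prime (prism_vertices n) (prism_edges n)"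
  unfolding odd_prime_def odd_prime_labeling_def
proof (intro exI conjI allI impI)
  show "bij_betw (lab n) (prism_vertices n) {k. odd k \<and> k \<le> 2 * card (prism_vertices n) - 1}"
    using lab_inj lab_img by (simp add: bij_betw_def)
next
  fix u v assume "{u, v} \<in> prism_edges n"
  then obtain a b where ab: "{u,v} = {a,b}" and g: "gcd (lab n a) (lab n b) = 1"
  proof (unfold prism_edges_def, elim UnE imageE)
    fix i assume "{u,v} = {Inl i, Inl (Suc i mod n)}" "i \<in> {0..<n}"
    moreover assume "\<And>a b. {u, v} = {a, b} \<Longrightarrow> gcd (lab n a) (lab n b) = 1 \<Longrightarrow> thesis"
    ultimately show thesis using edge_cases(1)[OF assms, of i] by simp
  next
    fix i assume "{u,v} = {Inr i, Inr (Suc i mod n)}" "i \<in> {0..<n}"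
    moreover assume "\<And>a b. {u, v} = {a, b} \<Longrightarrow> gcd (lab n a) (lab n b) = 1 \<Longrightarrow> thesis"
    ultimately show thesis using edge_cases(2)[OF assms, of i] by simp
  next
    fix i assume "{u,v} = {Inl i, Inr i}" "i \<in> {0..<n}"
    moreover assume "\<And>a b. {u, v} = {a, b} \<Longrightarrow> gcd (lab n a) (lab n b) = 1 \<Longrightarrow> thesis"
    ultimately show thesis using edge_cases(3)[OF assms, of i] by simp
  qed
  from ab have "(u = a \<and> v = b) \<or> (u = b \<and> v = a)" by (simp add: doubleton_eq_iff)
  then show "gcd (lab n u) (lab n v) = 1" using g by (auto simp: gcd.commute)
qed

end
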